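(* Let $c\geq1$ be a natural number and let $X$ be a finite set of natural numbers, all greater than $2$, which is $(\omega\cdot c)$-large. Then every colouring $C\colon X\to\{0,\dots,c-1\}$ admits an $\omega$-large subset $H\subseteq X$ on which $C$ is constant.
   Context: Ordinals are notations below $\varepsilon_0$ in Cantor normal form; $\omega\cdot c$ denotes $\omega+\dots+\omega$ ($c$ times). Fundamental sequences: $0[x]=0$; $(\beta+1)[x]=\beta$; $(\beta+\omega)[x]=\beta+x$, meaning $\beta$ followed by $x$ copies of $1=\omega^0$. In general, for $\alpha=\omega^{\alpha_0}+\dots+\omega^{\alpha_n}$ with last exponent $\alpha_n=\delta+1$, $\alpha[x]=\omega^{\alpha_0}+\dots+\omega^{\alpha_{n-1}}+\omega^\delta\cdot x$. A finite set $X=\{x_0<\dots<x_{|X|-1}\}$ is $\alpha$-large if $\alpha[x_0][x_1]\cdots[x_{|X|-1}]=0$. *)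

theory Defs
  imports Main
begin

text \<open>Ordinal notations below epsilon_0 in Cantor normal form:
  CNF xs  denotes  omega^(xs!0) + ... + omega^(xs!(n-1)), exponents given again as
  notations (intended to be non-increasing). CNF [] is 0.\<close>
datatype cnf = CNF "cnf list"

definition cnf_zero :: cnf where "cnf_zero = CNF []"
definition cnf_one :: cnf where "cnf_one = CNF [cnf_zero]"
definition cnf_omega :: cnf where "cnf_omega = CNF [cnf_one]"
definition cnf_omega_mul :: "nat \<Rightarrow> cnf" where
  "cnf_omega_mul c = CNF (replicate c cnf_one)"

lemma size_last_less: "xs \<noteq> [] \<Longrightarrow> size (last xs) < Suc (size_list size xs)"
  by (induction xs) auto

text \<open>Fundamental sequences:
  0[x] = 0;  (beta+1)[x] = beta;
  (beta + omega^(delta+1))[x] = beta + omega^delta * x;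
  (beta + omega^lambda)[x] = beta + omega^(lambda[x]) for limit lambda (standard).\<close>
function fs :: "cnf \<Rightarrow> nat \<Rightarrow> cnf" where
  "fs (CNF xs) x =
    (if xs = [] then CNF []
     else (case last xs of CNF es \<Rightarrow>
       if es = [] then CNF (butlast xs)
       else if last es = CNF [] then CNF (butlast xs @ replicate x (CNF (butlast es)))
       else CNF (butlast xs @ [fs (CNF es) x])))"
  by pat_completeness auto
termination
proof (relation "measure (\<lambda>(a, _). size a)")
  show "wf (measure (\<lambda>(a, _). size a))" by simp
next
  fix xs :: "cnf list" and x :: nat and es
  assume "xs \<noteq> []" "last xs = CNF es"
  hence "size (CNF es) < size (CNF xs)" using size_last_less[of xs] by simp
  thus "((CNF es, x), CNF xs, x) \<in> measure (\<lambda>(a, _). size a)" by simp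
qed

definition large :: "cnf \<Rightarrow> nat set \<Rightarrow> bool" where
  "large \<alpha> X \<longleftrightarrow> finite X \<and> foldl fs \<alpha> (sorted_list_of_set X) = cnf_zero"

end

theory Submission
  imports Defs
begin

definition st :: "nat \<Rightarrow> nat \<Rightarrow> cnf" where
  "st a b = CNF (replicate a cnf_one @ replicate b cnf_zero)"

lemma fs_st_b: "fs (st a (Suc b)) x = st a b"
  by (simp add: st_def cnf_zero_def butlast_append del: replicate_Suc)
     (simp add: replicate_append_same[symmetric])

lemma fs_st_a: "fs (st (Suc a) 0) x = st a x"
  by (simp add: st_def cnf_zero_def cnf_one_def butlast_append del: replicate_Suc)
     (simp add: replicate_append_same[symmetric])

lemma fs_st_0: "fs (st 0 0) x = st 0 0"
  by (simp add: st_def)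

lemma st_zero_iff: "st a b = cnf_zero \<longleftrightarrow> a = 0 \<and> b = 0"
  by (simp add: st_def cnf_zero_def)

lemma fold_st0: "length ys \<ge> b \<Longrightarrow> foldl fs (st 0 b) ys = st 0 0"
proof (induction ys arbitrary: b)
  case Nil then show ?case by simp
next
  case (Cons y ys)
  show ?case
  proof (cases b)
    case 0
    then have "foldl fs (st 0 0) ys = st 0 0" for ys
      by (induction ys) (auto simp: fs_st_0)
    then show ?thesis using 0 by (simp add: fs_st_0)
  next
    case (Suc b')
    then show ?thesis using Cons by (simp add: fs_st_b)
  qed
qed

lemma large_omega_suff:
  assumes "finite H" "H \<noteq> {}" "card H > Min H"
  shows "large cnf_omega H"
proof -
  let ?L = "sorted_list_of_set H"
  have len: "length ?L = card H" by simp
  have s: "sorted ?L" "set ?L = H" using assms by auto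
  then obtain h rest where L: "?L = h # rest" using assms(2)
    by (cases ?L) auto
  have "h = Min H"
  proof -
    have "\<forall>y\<in>H. h \<le> y" using s L by auto
    moreover have "h \<in> H" using s L by auto
    ultimately show ?thesis using assms by (intro Min_eqI[symmetric]) auto
  qed
  then have "length rest \<ge> h" using len L assms(3) by simp
  moreover have "cnf_omega = st 1 0" by (simp add: st_def cnf_omega_def)
  moreover have "fs (st (Suc 0) 0) h = st 0 h" by (rule fs_st_a)
  ultimately have "foldl fs cnf_omega ?L = st 0 0"
    using L fold_st0 by (metis One_nat_def foldl_Cons)
  then show ?thesis unfolding large_def using assms by (simp add: st_zero_iff)
qed

definition firsts :: "(nat \<Rightarrow> nat) \<Rightarrow> nat list \<Rightarrow> nat set" where
  "firsts C P = {x \<in> set P. \<forall>y\<in>set P. C y = C x \<longrightarrow> x \<le> y}"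

lemma firsts_snoc:
  assumes "\<forall>y\<in>set P. y < x"
  shows "firsts C (P @ [x]) = firsts C P \<union> (if \<forall>y\<in>set P. C y \<noteq> C x then {x} else {})"
  using assms unfolding firsts_def by (auto simp: less_imp_le) (force)+

lemma firsts_inj: "inj_on C (firsts C P)"
  unfolding firsts_def inj_on_def by (auto intro: antisym)

lemma firsts_finite: "finite (firsts C P)"
  unfolding firsts_def by auto

lemma firsts_card:
  assumes "\<forall>y\<in>set P. C y < c" shows "card (firsts C P) \<le> c"
proof -
  have "card (firsts C P) = card (C ` firsts C P)" using firsts_inj card_image by metis
  also have "\<dots> \<le> card {..<c}"
    by (rule card_mono) (use assms in \<open>auto simp: firsts_def\<close>)
  finally show ?thesis by simp
qed

lemma sorted_le_nth:
  fixes L :: "nat list"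
  assumes "sorted_wrt (<) L" "i \<le> m" "m < length L" shows "L ! i \<le> L ! m"
  using assms sorted_wrt_nth_less[of "(<)" L i m] by (cases "i = m") auto

lemma cover:
  assumes sw: "sorted_wrt (<) L" and dL: "distinct L" and k: "k \<le> length L"
   and H0: "\<forall>i. {x \<in> set L. C x = i} \<noteq> {} \<longrightarrow> card {x \<in> set L. C x = i} \<le> Min {x \<in> set L. C x = i}"
  shows "k \<le> \<Sum>(firsts C (take k L))"
proof -
  let ?P = "take k L"
  let ?F = "firsts C ?P"
  have cardP: "card (set ?P) = k" using dL k by (simp add: distinct_card)
  have U: "set ?P = (\<Union>f\<in>?F. {y\<in>set ?P. C y = C f})"
  proof
    show "(\<Union>f\<in>?F. {y\<in>set ?P. C y = C f}) \<subseteq> set ?P" by auto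
  next
    show "set ?P \<subseteq> (\<Union>f\<in>?F. {y\<in>set ?P. C y = C f})"
    proof
      fix y assume y: "y \<in> set ?P"
      define f where "f = Min {z\<in>set ?P. C z = C y}"
      have fin: "finite {z\<in>set ?P. C z = C y}" by auto
      have fin2: "f \<in> {z\<in>set ?P. C z = C y}" unfolding f_def using y fin
        by (intro Min_in) auto
      have "\<forall>z\<in>set ?P. C z = C f \<longrightarrow> f \<le> z" using fin fin2 unfolding f_def by auto
      then have "f \<in> ?F" using fin2 unfolding firsts_def by auto
      then show "y \<in> (\<Union>f\<in>?F. {y\<in>set ?P. C y = C f})" using fin2 y by (auto intro!: bexI[of _ f])
    qed
  qed
  have "card (set ?P) = (\<Sum>f\<in>?F. card {y\<in>set ?P. C y = C f})"
  proof (subst U, rule card_UN_disjoint)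
    show "finite ?F" by (rule firsts_finite)
    show "\<forall>i\<in>?F. finite {y\<in>set ?P. C y = C i}" by auto
    show "\<forall>i\<in>?F. \<forall>j\<in>?F. i \<noteq> j \<longrightarrow> {y\<in>set ?P. C y = C i} \<inter> {y\<in>set ?P. C y = C j} = {}"
    proof (intro ballI impI)
      fix i j assume ij: "i \<in> ?F" "j \<in> ?F" "i \<noteq> j"
      then have "C i \<noteq> C j" using firsts_inj[of C ?P] by (metis inj_onD)
      then show "{y\<in>set ?P. C y = C i} \<inter> {y\<in>set ?P. C y = C j} = {}" by auto
    qed
  qed
  also have "\<dots> \<le> (\<Sum>f\<in>?F. f)"
  proof (rule sum_mono)
    fix f assume fF: "f \<in> ?F"
    let ?A = "{x \<in> set L. C x = C f}"
    have fP: "f \<in> set ?P" and ffirst: "\<forall>y\<in>set ?P. C y = C f \<longrightarrow> f \<le> y"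
      using fF unfolding firsts_def by auto
    have fA: "f \<in> ?A" using fP by (auto dest: in_set_takeD)
    have "card {y\<in>set ?P. C y = C f} \<le> card ?A"
      by (rule card_mono) (auto dest: in_set_takeD)
    also have "\<dots> \<le> Min ?A"
    proof -
      have ne: "?A \<noteq> {}" using fA by blast
      show ?thesis by (rule mp[OF H0[THEN spec, of "C f"] ne])
    qed
    also have "Min ?A = f"
    proof (rule Min_eqI)
      show "finite ?A" by auto
      show "f \<in> ?A" by (rule fA)
      fix y assume yA: "y \<in> ?A"
      show "f \<le> y"
      proof (rule ccontr)
        assume "\<not> f \<le> y"
        then have lt: "y < f" by simp
        obtain m where m: "m < length L" "y = L ! m" using yA by (auto simp: in_set_conv_nth)
        obtain i where i: "i < length ?P" "f = ?P ! i" using fP by (auto simp: in_set_conv_nth)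
        have ik: "i < k" "f = L ! i" using i by auto
        have "m < i"
        proof (rule ccontr)
          assume "\<not> m < i"
          then have "L ! i \<le> L ! m" using sorted_le_nth[OF sw _ m(1)] by simp
          then show False using lt m ik by simp
        qed
        then have "y \<in> set ?P" using m ik by (auto simp: in_set_conv_nth intro!: exI[of _ m])
        then show False using ffirst yA lt by auto
      qed
    qed
    finally show "card {y\<in>set ?P. C y = C f} \<le> f" .
  qed
  finally show ?thesis using cardP by simp
qed

theorem lemma4p1:
  fixes c :: nat and X :: "nat set" and C :: "nat \<Rightarrow> nat"
  assumes "c \<ge> 1"
    and "finite X"
    and "\<forall>x\<in>X. x > 2"
    and "large (cnf_omega_mul c) X"
    and "\<forall>x\<in>X. C x < c"
  shows "\<exists>H. H \<subseteq> X \<and> large cnf_omega H \<and> (\<exists>i. \<forall>x\<in>H. C x = i)"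
proof (rule ccontr)
  assume neg: "\<not> ?thesis"
  define L where "L = sorted_list_of_set X"
  have sw: "sorted_wrt (<) L" unfolding L_def by (rule strict_sorted_list_of_set)
  have dL: "distinct L" unfolding L_def by simp
  have sL: "set L = X" unfolding L_def using assms(2) by simp
  have H0: "\<forall>i. {x \<in> set L. C x = i} \<noteq> {} \<longrightarrow> card {x \<in> set L. C x = i} \<le> Min {x \<in> set L. C x = i}"
  proof (intro allI impI)
    fix i assume ne: "{x \<in> set L. C x = i} \<noteq> {}"
    show "card {x \<in> set L. C x = i} \<le> Min {x \<in> set L. C x = i}"
    proof (rule ccontr)
      assume "\<not> ?thesis"
      then have "large cnf_omega {x \<in> set L. C x = i}"
        using ne large_omega_suff[of "{x \<in> set L. C x = i}"] by (simp add: not_le)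
      then have "\<exists>H. H \<subseteq> X \<and> large cnf_omega H \<and> (\<exists>i. \<forall>x\<in>H. C x = i)"
        using sL by (intro exI[of _ "{x \<in> set L. C x = i}"]) auto
      with neg show False by simp
    qed
  qed
  have colL: "\<forall>y\<in>set L. C y < c" using assms(5) sL by simp
  have fold: "foldl fs (st c 0) L = st 0 0"
    using assms(4) unfolding large_def L_def st_def cnf_omega_mul_def cnf_zero_def by simp
  define F where "F k = firsts C (take k L)" for k
  define Inv where "Inv k \<longleftrightarrow> (\<exists>a b. foldl fs (st c 0) (take k L) = st a b \<and> a \<le> c \<and>
      (k = 0 \<longrightarrow> a = c \<and> b = 0) \<and>
      (0 < k \<longrightarrow> int c - int a \<le> int (card (F k)) \<and>
         int (\<Sum>(F k)) - int k - int b \<le> (int (card (F k)) - (int c - int a)) * int (L ! (k - 1)) - 1))" for k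
  have nF: "card (F k) \<le> c" for k
    unfolding F_def by (rule firsts_card) (use colL in \<open>meson in_set_takeD\<close>)
  have sF: "k \<le> length L \<Longrightarrow> k \<le> \<Sum>(F k)" for k
    unfolding F_def by (rule cover[OF sw dL _ H0])
  have not00: "\<not> (foldl fs (st c 0) (take k L) = st 0 0)" if hh: "Inv k" "k \<le> length L" "0 < k" for k
  proof
    assume e: "foldl fs (st c 0) (take k L) = st 0 0"
    obtain a b where ab: "foldl fs (st c 0) (take k L) = st a b" "a \<le> c"
      "int c - int a \<le> int (card (F k))"
      "int (\<Sum>(F k)) - int k - int b \<le> (int (card (F k)) - (int c - int a)) * int (L ! (k - 1)) - 1"
      using hh(1,3) unfolding Inv_def by blast
    have "st a b = st 0 0" using e ab(1) by simp
    then have "a = 0 \<and> b = 0" using st_zero_iff[of a b] st_zero_iff[of 0 0] by simp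
    then have "int (card (F k)) - (int c - int a) \<le> 0" using nF[of k] by simp
    then have "(int (card (F k)) - (int c - int a)) * int (L ! (k - 1)) \<le> 0"
      by (simp add: mult_nonpos_nonneg)
    then show False using ab(4) sF[OF hh(2)] \<open>a = 0 \<and> b = 0\<close> by linarith
  qed
  have Inv_all: "k \<le> length L \<Longrightarrow> Inv k" for k
  proof (induction k)
    case 0
    then show ?case unfolding Inv_def by auto
  next
    case (Suc k)
    then have kl: "k < length L" by simp
    have IH: "Inv k" using Suc by simp
    define x where "x = L ! k"
    have tk: "take (Suc k) L = take k L @ [x]" unfolding x_def using kl take_Suc_conv_app_nth by blast
    have smaller: "\<forall>y\<in>set (take k L). y < x"
    proof
      fix y assume "y \<in> set (take k L)"
      then obtain m where "m < k" "y = L ! m" using kl by (auto simp: in_set_conv_nth)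
      then show "y < x" unfolding x_def using sorted_wrt_nth_less[OF sw, of m k] kl by simp
    qed
    define d :: nat where "d = (if \<forall>y\<in>set (take k L). C y \<noteq> C x then 1 else 0)"
    have xnot: "x \<notin> F k" using smaller unfolding F_def firsts_def by auto
    have FS: "F (Suc k) = F k \<union> (if \<forall>y\<in>set (take k L). C y \<noteq> C x then {x} else {})"
      unfolding F_def tk by (rule firsts_snoc[OF smaller])
    have finF: "finite (F k)" unfolding F_def by (rule firsts_finite)
    have cardS: "card (F (Suc k)) = card (F k) + d" and sumS: "\<Sum>(F (Suc k)) = \<Sum>(F k) + d * x"
      unfolding FS d_def using xnot finF by auto
    have foldS: "foldl fs (st c 0) (take (Suc k) L) = fs (foldl fs (st c 0) (take k L)) x"
      unfolding tk by simp
    obtain a b where ab: "foldl fs (st c 0) (take k L) = st a b" "a \<le> c"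
      "k = 0 \<longrightarrow> a = c \<and> b = 0"
      "0 < k \<longrightarrow> int c - int a \<le> int (card (F k)) \<and>
         int (\<Sum>(F k)) - int k - int b \<le> (int (card (F k)) - (int c - int a)) * int (L ! (k - 1)) - 1"
      using IH unfolding Inv_def by blast
    show ?case
    proof (cases "k = 0")
      case True
      then have a: "a = c" "b = 0" using ab(3) by auto
      obtain c' where c': "c = Suc c'" using assms(1) by (cases c) auto
      have st1: "foldl fs (st c 0) (take (Suc k) L) = st c' x"
        using foldS ab(1) a c' fs_st_a by simp
      have F0: "F 0 = {}" unfolding F_def firsts_def by simp
      have "d = 1" unfolding d_def using True by simp
      then have cs: "card (F (Suc k)) = 1" "\<Sum>(F (Suc k)) = x" using cardS sumS F0 True by auto
      show ?thesis unfolding Inv_def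
        apply (rule exI[of _ c'], rule exI[of _ x])
        using cs st1 c' True by (auto simp: x_def)
    next
      case False
      then have kp: "0 < k" by simp
      define n where "n = int (card (F k))"
      define j where "j = int c - int a"
      define S where "S = int (\<Sum>(F k))"
      define M where "M = int (L ! (k - 1))"
      define xx where "xx = int x"
      define dd where "dd = int d"
      have I1: "j \<le> n" and I2: "S - int k - int b \<le> (n - j) * M - 1"
        using ab(4) kp unfolding n_def j_def S_def M_def by auto
      have "L ! (k - 1) \<in> set (take k L)" using kl kp
        by (auto simp: in_set_conv_nth intro!: exI[of _ "k - 1"])
      then have Mx: "M \<le> xx" unfolding M_def xx_def using smaller by force
      have "k \<le> \<Sum>(F k)" using sF[of k] kl by simp
      then have sk: "int k \<le> S" unfolding S_def by (simp only: of_nat_le_iff)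
      have Ss: "int (\<Sum>(F (Suc k))) = S + dd * xx" unfolding S_def dd_def xx_def sumS by simp
      have ns: "int (card (F (Suc k))) = n + dd" unfolding n_def dd_def cardS by simp
      have dd0: "0 \<le> dd" unfolding dd_def by simp
      have LM: "L ! (Suc k - 1) = x" unfolding x_def by simp
      have prod: "(n - j) * M \<le> (n - j) * xx" using I1 Mx by (simp add: mult_left_mono)
      have exp1: "(n + dd - j) * xx = (n - j) * xx + dd * xx" by (simp add: algebra_simps)
      show ?thesis
      proof (cases b)
        case (Suc b')
        have st1: "foldl fs (st c 0) (take (Suc k) L) = st a b'"
          using foldS ab(1) Suc fs_st_b by simp
        have fin1: "S + dd * xx - int (Suc k) - int b' \<le> (n + dd - j) * xx - 1"
          using I2 prod exp1 Suc by simp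
        show ?thesis unfolding Inv_def
          apply (rule exI[of _ a], rule exI[of _ b'])
          using fin1 st1 ab(2) I1 dd0 Ss ns LM unfolding j_def xx_def by simp
      next
        case 0
        note b0 = 0
        show ?thesis
        proof (cases a)
          case 0
          then have "foldl fs (st c 0) (take k L) = st 0 0" using ab(1) b0 by simp
          then show ?thesis using not00[OF IH _ kp] kl by simp
        next
          case (Suc a')
          have st1: "foldl fs (st c 0) (take (Suc k) L) = st a' x"
            using foldS ab(1) Suc b0 fs_st_a by simp
          have nj1: "1 \<le> n - j"
          proof (rule ccontr)
            assume "\<not> 1 \<le> n - j"
            then have "n - j \<le> 0" by simp
            then have "(n - j) * M \<le> 0" unfolding M_def by (simp add: mult_nonpos_nonneg)
            then show False using I2 sk b0 by simp
          qed
          have j': "int c - int a' = j + 1" unfolding j_def using Suc by simp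
          have exp2: "(n + dd - (j + 1)) * xx = (n - j) * xx + dd * xx - xx" by (simp add: algebra_simps)
          have fin1: "S + dd * xx - int (Suc k) - xx \<le> (n + dd - (j + 1)) * xx - 1"
            using I2 prod exp2 b0 by simp
          show ?thesis unfolding Inv_def
            apply (rule exI[of _ a'], rule exI[of _ x])
            using fin1 st1 ab(2) Suc nj1 dd0 Ss ns LM j' unfolding xx_def by simp
        qed
      qed
    qed
  qed
  have "L \<noteq> []"
  proof
    assume "L = []"
    then have "st c 0 = st 0 0" using fold by simp
    then show False using assms(1) st_zero_iff[of c 0] st_zero_iff[of 0 0] by simp
  qed
  then show False using not00[OF Inv_all[OF order.refl]] fold by simp
qed

end
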